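(* Let $N\geq 0$ be an integer. Then for all $0<x<\pi/2$, \[ \alpha_N x^4<\left(\frac{x}{\sin x}\right)^2+\frac{x}{\tan x}-\left(2+4x^4\sum_{k=1}^{N}\frac{1}{(\pi^2k^2-x^2)^2}\right)<\beta_N x^4, \] with the best possible constants \[ \alpha_N=\frac{2\psi'''(N+1)}{3\pi^4},\qquad \beta_N=\frac{8\bigl((2N+1)^2\psi'(N+\tfrac12)-4(N+1)\bigr)}{(2N+1)^2\pi^4}. \]
   Context: $\psi=\Gamma'/\Gamma$ is the digamma function, and $\psi',\psi'''$ denote its first and third derivatives (polygamma functions). An empty sum is understood to be zero. *)

theory Defs
  imports "HOL-Analysis.Analysis"
begin

definition F7 :: "nat \<Rightarrow> real \<Rightarrow> real" where
  "F7 N x = (x / sin x)\<^sup>2 + x / tan x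
     - (2 + 4 * x ^ 4 * (\<Sum>k=1..N. 1 / (pi\<^sup>2 * (real k)\<^sup>2 - x\<^sup>2)\<^sup>2))"

definition alpha7 :: "nat \<Rightarrow> real" where
  "alpha7 N = 2 * Polygamma 3 (real N + 1) / (3 * pi ^ 4)"

definition beta7 :: "nat \<Rightarrow> real" where
  "beta7 N = 8 * ((2 * real N + 1)\<^sup>2 * Polygamma 1 (real N + 1/2) - 4 * (real N + 1))
             / ((2 * real N + 1)\<^sup>2 * pi ^ 4)"

end

theory Submission
  imports Defs
begin

lemma pos_not_nonpos_Int: "(t::real) > 0 \<Longrightarrow> t \<notin> \<int>\<^sub>\<le>\<^sub>0"
  using nonpos_Ints_nonpos by fastforce

lemma Gamma_refl_real:
  fixes t :: real
  shows "Gamma t * Gamma (1 - t) = pi / sin (pi * t)"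
proof -
  have "complex_of_real (Gamma t * Gamma (1 - t)) = complex_of_real (pi / sin (pi * t))"
    using Gamma_reflection_complex[of "complex_of_real t"]
    by (simp add: Gamma_complex_of_real[symmetric] sin_of_real[symmetric])
  thus ?thesis by (simp only: of_real_eq_iff)
qed

lemma digamma_refl:
  fixes t :: real assumes t: "0 < t" "t < 1"
  shows "Digamma (1 - t) - Digamma t = pi * cos (pi * t) / sin (pi * t)"
proof -
  have s: "sin (pi * t) > 0" using t by (intro sin_gt_zero) auto
  have d1: "((\<lambda>s. Gamma s * Gamma (1 - s)) has_field_derivative
      (Gamma t * Digamma t * Gamma (1 - t) + Gamma t * (Gamma (1 - t) * Digamma (1 - t) * (-1)))) (at t)"
    using t by (auto intro!: derivative_eq_intros pos_not_nonpos_Int)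
  have d2: "((\<lambda>s. Gamma s * Gamma (1 - s)) has_field_derivative
      (- (pi * (cos (pi * t) * pi)) / (sin (pi * t))\<^sup>2)) (at t)"
  proof (rule has_field_derivative_transform_within_open[of "\<lambda>s. pi / sin (pi * s)" _ _ "{0<..<1}"])
    show "((\<lambda>s. pi / sin (pi * s)) has_field_derivative - (pi * (cos (pi * t) * pi)) / (sin (pi * t))\<^sup>2) (at t)"
      using s by (auto intro!: derivative_eq_intros simp: power2_eq_square)
  qed (use t Gamma_refl_real in auto)
  have eq: "Gamma t * Digamma t * Gamma (1 - t) + Gamma t * (Gamma (1 - t) * Digamma (1 - t) * (-1))
      = - (pi * (cos (pi * t) * pi)) / (sin (pi * t))\<^sup>2"
    using DERIV_unique[OF d1 d2] .
  have g: "Gamma t * Gamma (1 - t) = pi / sin (pi * t)" by (rule Gamma_refl_real)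
  have "(pi / sin (pi * t)) * (Digamma t - Digamma (1 - t)) = - (pi * (cos (pi * t) * pi)) / (sin (pi * t))\<^sup>2"
    using eq unfolding g[symmetric] by (simp add: algebra_simps)
  hence h: "pi * (pi * (cos (pi * t) * sin (pi * t))) +
      pi * (Digamma t * (sin (pi * t) * sin (pi * t))) =
      pi * (sin (pi * t) * (sin (pi * t) * Digamma (1 - t)))"
    using s by (simp add: field_simps power2_eq_square)
  hence "sin (pi * t) * (pi * (sin (pi * t) * (Digamma (1 - t) - Digamma t) - pi * cos (pi * t))) = 0"
    by algebra
  hence "pi * (sin (pi * t) * (Digamma (1 - t) - Digamma t) - pi * cos (pi * t)) = 0"
    using s by simp
  hence "sin (pi * t) * (Digamma (1 - t) - Digamma t) = pi * cos (pi * t)" by simp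
  thus ?thesis using s by (simp add: field_simps)
qed

lemma trigamma_refl:
  fixes t :: real assumes t: "0 < t" "t < 1"
  shows "Polygamma 1 t + Polygamma 1 (1 - t) = pi\<^sup>2 / (sin (pi * t))\<^sup>2"
proof -
  have s: "sin (pi * t) > 0" using t by (intro sin_gt_zero) auto
  have d1: "((\<lambda>s. Digamma (1 - s) - Digamma s) has_field_derivative
      (Polygamma 1 (1 - t) * (-1) - Polygamma 1 t)) (at t)"
    using t by (auto intro!: derivative_eq_intros pos_not_nonpos_Int)
  have d2: "((\<lambda>s. Digamma (1 - s) - Digamma s) has_field_derivative
      ((- (sin (pi * t) * pi) * pi * sin (pi * t) - pi * cos (pi * t) * (cos (pi * t) * pi)) / (sin (pi * t))\<^sup>2)) (at t)"
  proof (rule has_field_derivative_transform_within_open[of "\<lambda>s. pi * cos (pi * s) / sin (pi * s)" _ _ "{0<..<1}"])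
    show "((\<lambda>s. pi * cos (pi * s) / sin (pi * s)) has_field_derivative ((- (sin (pi * t) * pi) * pi * sin (pi * t) - pi * cos (pi * t) * (cos (pi * t) * pi)) / (sin (pi * t))\<^sup>2)) (at t)"
      using s by (auto intro!: derivative_eq_intros simp: power2_eq_square)
  qed (use t digamma_refl in auto)
  have "(- (sin (pi * t) * pi) * pi * sin (pi * t) - pi * cos (pi * t) * (cos (pi * t) * pi))
      = - pi\<^sup>2 * ((sin (pi * t))\<^sup>2 + (cos (pi * t))\<^sup>2)" by algebra
  also have "\<dots> = - pi\<^sup>2" by (simp only: sin_cos_squared_add)
  finally have X: "(- (sin (pi * t) * pi) * pi * sin (pi * t) - pi * cos (pi * t) * (cos (pi * t) * pi)) = - pi\<^sup>2" .
  have "Polygamma 1 (1 - t) * (-1) - Polygamma 1 t = - pi\<^sup>2 / (sin (pi * t))\<^sup>2"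
    using DERIV_unique[OF d1 d2] unfolding X .
  thus ?thesis by simp
qed


lemma trigamma_sums:
  fixes z :: real assumes "z > 0"
  shows "(\<lambda>k. 1 / (real k + z)\<^sup>2) sums Polygamma 1 z"
  using Polygamma_LIMSEQ[of z 1] assms by (simp add: inverse_eq_divide add.commute power2_eq_square)

lemma tetragamma_sums:
  fixes z :: real assumes "z > 0"
  shows "(\<lambda>k. 1 / (real k + z) ^ 4) sums (Polygamma 3 z / 6)"
  using Polygamma_LIMSEQ[of z 3] assms by (simp add: inverse_eq_divide add.commute fact_numeral)

lemma digamma_diff_sums:
  fixes a b :: real assumes "a > 0" "b > 0"
  shows "(\<lambda>k. 1 / (real k + b) - 1 / (real k + a)) sums (Digamma a - Digamma b)"
proof -
  have sa: "(\<lambda>k. inverse (real (Suc k)) - inverse (a + real k)) sums (Digamma a + euler_mascheroni)"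
    using summable_Digamma[of a] assms by (simp add: Digamma_def summable_sums)
  have sb: "(\<lambda>k. inverse (real (Suc k)) - inverse (b + real k)) sums (Digamma b + euler_mascheroni)"
    using summable_Digamma[of b] assms by (simp add: Digamma_def summable_sums)
  from sums_diff[OF sa sb] show ?thesis by (simp add: inverse_eq_divide add.commute)
qed

lemma pf:
  fixes m t :: real assumes "t \<noteq> 0" "m - t \<noteq> 0" "m + t \<noteq> 0"
  shows "1 / (m\<^sup>2 - t\<^sup>2)\<^sup>2 = (1 / (m - t)\<^sup>2 + 1 / (m + t)\<^sup>2 - (1 / (m - t) - 1 / (m + t)) / t) / (4 * t\<^sup>2)"
proof -
  define a where "a = m - t"
  define b where "b = m + t"
  have a: "a \<noteq> 0" and b: "b \<noteq> 0" using assms by (auto simp: a_def b_def)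
  have mt: "m\<^sup>2 - t\<^sup>2 = a * b" by (simp add: a_def b_def power2_eq_square algebra_simps)
  have e1: "1 / a - 1 / b = 2 * t / (a * b)" using a b by (simp add: a_def b_def field_simps)
  have e2: "(1 / a - 1 / b) / t = 2 / (a * b)" using e1 assms(1) by simp
  have e3: "1 / a\<^sup>2 + 1 / b\<^sup>2 = (1 / a - 1 / b)\<^sup>2 + 2 / (a * b)" using a b
    by (simp add: power2_eq_square field_simps)
  have "(1 / a\<^sup>2 + 1 / b\<^sup>2 - (1 / a - 1 / b) / t) / (4 * t\<^sup>2) = (2 * t / (a * b))\<^sup>2 / (4 * t\<^sup>2)"
    unfolding e3 e2 e1 by simp
  also have "\<dots> = 1 / (a * b)\<^sup>2" using assms(1) a b by (simp add: power2_eq_square field_simps)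
  finally show ?thesis unfolding mt a_def b_def by simp
qed

lemma main_sums:
  fixes c t :: real assumes "t \<noteq> 0" "c - t > 0" "c + t > 0"
  shows "(\<lambda>k. 1 / ((real k + c)\<^sup>2 - t\<^sup>2)\<^sup>2) sums
     ((Polygamma 1 (c - t) + Polygamma 1 (c + t) - (Digamma (c + t) - Digamma (c - t)) / t) / (4 * t\<^sup>2))"
proof -
  have s1: "(\<lambda>k. 1 / (real k + (c - t))\<^sup>2) sums Polygamma 1 (c - t)" using assms by (intro trigamma_sums) auto
  have s2: "(\<lambda>k. 1 / (real k + (c + t))\<^sup>2) sums Polygamma 1 (c + t)" using assms by (intro trigamma_sums) auto
  have s3: "(\<lambda>k. 1 / (real k + (c - t)) - 1 / (real k + (c + t))) sums (Digamma (c + t) - Digamma (c - t))"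
    using assms by (intro digamma_diff_sums) auto
  have "(\<lambda>k. (1 / (real k + (c - t))\<^sup>2 + 1 / (real k + (c + t))\<^sup>2
      - (1 / (real k + (c - t)) - 1 / (real k + (c + t))) / t) / (4 * t\<^sup>2)) sums
     ((Polygamma 1 (c - t) + Polygamma 1 (c + t) - (Digamma (c + t) - Digamma (c - t)) / t) / (4 * t\<^sup>2))"
    by (intro sums_divide sums_diff sums_add s1 s2 s3)
  moreover have "\<And>k. 1 / ((real k + c)\<^sup>2 - t\<^sup>2)\<^sup>2 = (1 / (real k + (c - t))\<^sup>2 + 1 / (real k + (c + t))\<^sup>2
      - (1 / (real k + (c - t)) - 1 / (real k + (c + t))) / t) / (4 * t\<^sup>2)"
  proof -
    fix k
    have "real k + c - t > 0" "real k + c + t > 0" using assms by auto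
    from pf[of t "real k + c"] this assms show "?thesis k" by (simp add: algebra_simps)
  qed
  ultimately show ?thesis by simp
qed


definition gT :: "nat \<Rightarrow> real \<Rightarrow> nat \<Rightarrow> real" where
  "gT N t k = 1 / ((real k + (real N + 1))\<^sup>2 - t\<^sup>2)\<^sup>2"

definition T :: "nat \<Rightarrow> real \<Rightarrow> real" where
  "T N t = (\<Sum>k. gT N t k)"

lemma gT_mono:
  assumes "0 \<le> t1" "t1 < t2" "t2 \<le> 1/2"
  shows "gT N t1 k < gT N t2 k"
proof -
  let ?m = "real k + (real N + 1)"
  have m: "?m \<ge> 1" by simp
  have "t2\<^sup>2 \<le> (1/2)\<^sup>2" using assms by (intro power_mono) auto
  also have "(1/2)\<^sup>2 < ?m\<^sup>2" using m by (intro power_strict_mono) auto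
  finally have p2: "0 < ?m\<^sup>2 - t2\<^sup>2" by simp
  have "t1\<^sup>2 < t2\<^sup>2" using assms by (intro power_strict_mono) auto
  hence "?m\<^sup>2 - t2\<^sup>2 < ?m\<^sup>2 - t1\<^sup>2" by simp
  hence "(?m\<^sup>2 - t2\<^sup>2)\<^sup>2 < (?m\<^sup>2 - t1\<^sup>2)\<^sup>2" using p2 by (intro power_strict_mono) auto
  thus ?thesis unfolding gT_def using p2 by (intro divide_strict_left_mono mult_pos_pos) auto
qed

lemma gT_pos: "0 \<le> t \<Longrightarrow> t \<le> 1/2 \<Longrightarrow> gT N t k > 0"
proof -
  assume a: "0 \<le> t" "t \<le> 1/2"
  let ?m = "real k + (real N + 1)"
  have m: "?m \<ge> 1" by simp
  have "t\<^sup>2 \<le> (1/2)\<^sup>2" using a by (intro power_mono) auto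
  also have "(1/2)\<^sup>2 < ?m\<^sup>2" using m by (intro power_strict_mono) auto
  finally show ?thesis unfolding gT_def by simp
qed

lemma gT_sums_half:
  "gT N (1/2) sums (2 * Polygamma 1 (real N + 1/2) - 1 / (real N + 1/2)\<^sup>2 - 2 / (real N + 1/2))"
proof -
  have s: "gT N (1/2) sums ((Polygamma 1 (real N + 1 - 1/2) + Polygamma 1 (real N + 1 + 1/2)
      - (Digamma (real N + 1 + 1/2) - Digamma (real N + 1 - 1/2)) / (1/2)) / (4 * (1/2)\<^sup>2))"
    unfolding gT_def[abs_def] by (rule main_sums) auto
  have z: "real N + 1/2 \<noteq> 0" by (simp add: add_nonneg_pos)
  have e1: "real N + 1 - 1/2 = real N + 1/2" and e2: "real N + 1 + 1/2 = (real N + 1/2) + 1" by simp_all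
  have p: "Polygamma 1 ((real N + 1/2) + 1) = Polygamma 1 (real N + 1/2) - 1 / (real N + 1/2)\<^sup>2"
    using Polygamma_plus1[OF z, of 1] by (simp add: power2_eq_square)
  have d: "Digamma ((real N + 1/2) + 1) = Digamma (real N + 1/2) + 1 / (real N + 1/2)"
    using Digamma_plus1[OF z] by (simp add: inverse_eq_divide)
  show ?thesis using s unfolding e1 e2 p d by (simp add: power2_eq_square)
qed

lemma gT_sums_zero: "gT N 0 sums (Polygamma 3 (real N + 1) / 6)"
  unfolding gT_def[abs_def] using tetragamma_sums[of "real N + 1"]
  by (simp add: power2_eq_square power4_eq_xxxx mult.assoc)

lemma gT_summable:
  assumes "0 \<le> t" "t \<le> 1/2" shows "summable (gT N t)"
proof (rule summable_comparison_test[OF _ sums_summable[OF gT_sums_half]])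
  show "\<exists>M. \<forall>n\<ge>M. norm (gT N t n) \<le> gT N (1/2) n"
  proof (intro exI allI impI)
    fix n
    show "norm (gT N t n) \<le> gT N (1/2) n"
    proof (cases "t = 1/2")
      case True show ?thesis unfolding True using gT_pos[of "1/2" N n] by simp
    next
      case False thus ?thesis using gT_pos[OF assms, of N n] gT_mono[of t "1/2" N n] assms by auto
    qed
  qed
qed

lemma T_strict_mono:
  assumes "0 \<le> t1" "t1 < t2" "t2 \<le> 1/2" shows "T N t1 < T N t2"
proof -
  have "0 < (\<Sum>k. gT N t2 k - gT N t1 k)"
    using gT_mono[OF assms] by (intro suminf_pos summable_diff gT_summable) (use assms in auto)
  also have "\<dots> = T N t2 - T N t1" unfolding T_def
    by (rule suminf_diff[symmetric]) (intro gT_summable; use assms in auto)+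
  finally show ?thesis by simp
qed

lemma T_cont: "continuous_on {0..1/2} (T N)"
proof -
  have ul: "uniform_limit {0..1/2} (\<lambda>n t. \<Sum>i<n. gT N t i) (\<lambda>t. \<Sum>i. gT N t i) sequentially"
  proof (rule Weierstrass_m_test_ev[OF _ sums_summable[OF gT_sums_half[of N]]])
    show "\<forall>\<^sub>F n in sequentially. \<forall>t\<in>{0..1/2}. norm (gT N t n) \<le> gT N (1/2) n"
    proof (intro always_eventually allI ballI)
      fix n t assume t: "t \<in> {0..(1/2::real)}"
      show "norm (gT N t n) \<le> gT N (1/2) n"
      proof (cases "t = 1/2")
        case True show ?thesis unfolding True using gT_pos[of "1/2" N n] by simp
      next
        case False thus ?thesis using gT_pos[of t N n] gT_mono[of t "1/2" N n] t by auto
      qed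
    qed
  qed
  have "continuous_on {0..1/2} (\<lambda>t. \<Sum>i. gT N t i)"
  proof (rule uniform_limit_theorem[OF _ ul])
    show "\<forall>\<^sub>F n in sequentially. continuous_on {0..1/2} (\<lambda>t. \<Sum>i<n. gT N t i)"
    proof (intro always_eventually allI continuous_on_sum)
      fix n i
      have "continuous_on {0..1/2} (\<lambda>t. 1 / ((real i + (real N + 1))\<^sup>2 - t\<^sup>2)\<^sup>2)"
        using gT_pos[of _ N i] unfolding gT_def by (intro continuous_intros) auto
      thus "continuous_on {0..1/2} (\<lambda>t. gT N t i)" unfolding gT_def .
    qed
  qed simp
  thus ?thesis unfolding T_def[abs_def] .
qed


lemma G_eq:
  fixes t :: real assumes t: "0 < t" "t < 1/2"
  shows "(pi * t / sin (pi * t))\<^sup>2 + pi * t / tan (pi * t) - 2 =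
    4 * t ^ 4 * ((Polygamma 1 (1 - t) + Polygamma 1 (1 + t) - (Digamma (1 + t) - Digamma (1 - t)) / t) / (4 * t\<^sup>2))"
proof -
  have s: "sin (pi * t) > 0" using t by (intro sin_gt_zero) auto
  have tz: "t \<noteq> 0" using t by simp
  have p: "Polygamma 1 (1 + t) = Polygamma 1 t - 1 / t\<^sup>2"
    using Polygamma_plus1[OF tz, of 1] by (simp add: power2_eq_square add.commute)
  have d: "Digamma (1 + t) = Digamma t + 1 / t"
    using Digamma_plus1[OF tz] by (simp add: inverse_eq_divide add.commute)
  have r1: "Polygamma 1 (1 - t) = pi\<^sup>2 / (sin (pi * t))\<^sup>2 - Polygamma 1 t"
    using trigamma_refl[of t] t by simp
  have r2: "Digamma (1 - t) = Digamma t + pi * cos (pi * t) / sin (pi * t)"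
    using digamma_refl[of t] t by simp
  have "4 * t ^ 4 * ((Polygamma 1 (1 - t) + Polygamma 1 (1 + t) - (Digamma (1 + t) - Digamma (1 - t)) / t) / (4 * t\<^sup>2))
      = 4 * t ^ 4 * ((pi\<^sup>2 / (sin (pi * t))\<^sup>2 - 1 / t\<^sup>2 - (1 / t - pi * cos (pi * t) / sin (pi * t)) / t) / (4 * t\<^sup>2))"
    unfolding p d r1 r2 by simp
  also have "\<dots> = (pi * t / sin (pi * t))\<^sup>2 + pi * t / tan (pi * t) - 2"
    using s tz by (simp add: tan_def field_simps power2_eq_square power4_eq_xxxx)
  finally show ?thesis by simp
qed

lemma sum_reindex: "(\<Sum>k=1..N. f k) = (\<Sum>k<N. f (Suc k)) "
  by (induction N) auto

lemma F7_eq: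
  fixes t :: real assumes t: "0 < t" "t < 1/2"
  shows "F7 N (pi * t) = 4 * t ^ 4 * T N t"
proof -
  define S where "S = (Polygamma 1 (1 - t) + Polygamma 1 (1 + t) - (Digamma (1 + t) - Digamma (1 - t)) / t) / (4 * t\<^sup>2)"
  have s0: "gT 0 t sums S" unfolding S_def gT_def[abs_def]
    using main_sums[of t 1] t by simp
  have "(\<lambda>k. gT 0 t (k + N)) sums (S - (\<Sum>k<N. gT 0 t k))"
    by (rule sums_split_initial_segment[OF s0])
  moreover have "(\<lambda>k. gT 0 t (k + N)) = gT N t" by (auto simp: gT_def algebra_simps)
  ultimately have TN: "T N t = S - (\<Sum>k<N. gT 0 t k)" unfolding T_def by (simp add: sums_iff)
  have fs: "(\<Sum>k=1..N. 1 / (pi\<^sup>2 * (real k)\<^sup>2 - (pi * t)\<^sup>2)\<^sup>2) = (\<Sum>k<N. gT 0 t k) / pi ^ 4"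
    unfolding sum_reindex sum_divide_distrib
  proof (rule sum.cong)
    fix k assume "k \<in> {..<N}"
    have "pi\<^sup>2 * (real (Suc k))\<^sup>2 - (pi * t)\<^sup>2 = pi\<^sup>2 * ((real k + (real 0 + 1))\<^sup>2 - t\<^sup>2)"
      by (simp add: algebra_simps power2_eq_square)
    thus "1 / (pi\<^sup>2 * (real (Suc k))\<^sup>2 - (pi * t)\<^sup>2)\<^sup>2 = gT 0 t k / pi ^ 4"
      unfolding gT_def by (simp add: power_mult_distrib power2_eq_square power4_eq_xxxx)
  qed simp
  have "F7 N (pi * t) = 4 * t ^ 4 * S - 4 * (pi * t) ^ 4 * ((\<Sum>k<N. gT 0 t k) / pi ^ 4)"
    unfolding F7_def fs using G_eq[OF t] unfolding S_def by simp
  also have "\<dots> = 4 * t ^ 4 * T N t" unfolding TN by (simp add: power_mult_distrib algebra_simps)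
  finally show ?thesis .
qed

lemma T_zero: "T N 0 = Polygamma 3 (real N + 1) / 6"
  unfolding T_def using gT_sums_zero by (simp add: sums_iff)

lemma T_half: "T N (1/2) = 2 * Polygamma 1 (real N + 1/2) - 1 / (real N + 1/2)\<^sup>2 - 2 / (real N + 1/2)"
  unfolding T_def using gT_sums_half by (simp add: sums_iff)

lemma alpha_eq: "alpha7 N * pi ^ 4 = 4 * T N 0"
  unfolding alpha7_def T_zero by simp

lemma beta_aux:
  fixes P m :: real assumes "m > 0"
  shows "8 * (m\<^sup>2 * P - 2 * (m + 1)) / (m\<^sup>2 * pi ^ 4) * pi ^ 4 = 4 * (2 * P - 1 / (m / 2)\<^sup>2 - 2 / (m / 2))"
  using assms pi_gt_zero by (simp add: field_simps power2_eq_square)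

lemma beta_eq: "beta7 N * pi ^ 4 = 4 * T N (1/2)"
proof -
  have z: "2 * real N + 1 > 0" by simp
  have h: "real N + 1/2 = (2 * real N + 1) / 2" by simp
  have h2: "4 * (real N + 1) = 2 * ((2 * real N + 1) + 1)" by simp
  show ?thesis unfolding beta7_def T_half h h2 by (rule beta_aux[OF z])
qed

theorem theorem7:
  fixes N :: nat
  shows "(\<forall>x. 0 < x \<and> x < pi/2 \<longrightarrow> alpha7 N * x ^ 4 < F7 N x \<and> F7 N x < beta7 N * x ^ 4)
    \<and> (\<forall>a. a > alpha7 N \<longrightarrow> (\<exists>x. 0 < x \<and> x < pi/2 \<and> \<not> (a * x ^ 4 < F7 N x)))
    \<and> (\<forall>b. b < beta7 N \<longrightarrow> (\<exists>x. 0 < x \<and> x < pi/2 \<and> \<not> (F7 N x < b * x ^ 4)))"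
proof (intro conjI allI impI)
  have pi4: "pi ^ 4 > 0" by simp
  have key: "\<And>c t. c * (pi * t) ^ 4 = 4 * t ^ 4 * (c * pi ^ 4 / 4)"
    by (simp add: power_mult_distrib)
  {
    fix x :: real assume x: "0 < x \<and> x < pi/2"
    define t where "t = x / pi"
    have t: "0 < t" "t < 1/2" using x by (auto simp: t_def field_simps)
    have xt: "x = pi * t" by (simp add: t_def)
    have t4: "4 * t ^ 4 > 0" using t by simp
    have F: "F7 N x = 4 * t ^ 4 * T N t" unfolding xt by (rule F7_eq[OF t])
    have "alpha7 N * x ^ 4 = 4 * t ^ 4 * T N 0" unfolding xt key alpha_eq by simp
    also have "\<dots> < 4 * t ^ 4 * T N t"
      using T_strict_mono[of 0 t N] t t4 by (intro mult_strict_left_mono) auto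
    finally show "alpha7 N * x ^ 4 < F7 N x" unfolding F .
    have "F7 N x < 4 * t ^ 4 * T N (1/2)"
      using T_strict_mono[of t "1/2" N] t t4 unfolding F by (intro mult_strict_left_mono) auto
    also have "\<dots> = beta7 N * x ^ 4" unfolding xt key beta_eq by simp
    finally show "F7 N x < beta7 N * x ^ 4" .
  }
  note cont = T_cont[of N, unfolded continuous_on_iff]
  {
    fix a assume a: "a > alpha7 N"
    define A where "A = a * pi ^ 4 / 4"
    have "alpha7 N * pi ^ 4 < a * pi ^ 4" using a pi4 by (rule mult_strict_right_mono)
    hence A: "T N 0 < A" unfolding alpha_eq A_def by simp
    obtain d where d: "d > 0" "\<And>t. t \<in> {0..1/2} \<Longrightarrow> dist t 0 < d \<Longrightarrow> dist (T N t) (T N 0) < A - T N 0"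
      using cont[rule_format, of 0 "A - T N 0"] A by auto
    define t where "t = min (d/2) (1/4)"
    have t: "0 < t" "t < 1/2" "t \<le> d/2" using d by (auto simp: t_def)
    have "dist (T N t) (T N 0) < A - T N 0" using t d by (intro d(2)) (auto simp: dist_real_def)
    hence TA: "T N t < A" by (simp add: dist_real_def)
    have "F7 N (pi * t) < a * (pi * t) ^ 4"
      unfolding F7_eq[OF t(1,2)] key using TA t by (intro mult_strict_left_mono) (auto simp: A_def)
    thus "\<exists>x. 0 < x \<and> x < pi/2 \<and> \<not> (a * x ^ 4 < F7 N x)"
      using t by (intro exI[of _ "pi * t"]) auto
  }
  {
    fix b assume b: "b < beta7 N"
    define B where "B = b * pi ^ 4 / 4"
    have "b * pi ^ 4 < beta7 N * pi ^ 4" using b pi4 by (rule mult_strict_right_mono)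
    hence B: "B < T N (1/2)" unfolding beta_eq B_def by simp
    obtain d where d: "d > 0" "\<And>t. t \<in> {0..1/2} \<Longrightarrow> dist t (1/2) < d \<Longrightarrow> dist (T N t) (T N (1/2)) < T N (1/2) - B"
      using cont[rule_format, of "1/2" "T N (1/2) - B"] B by auto
    define t where "t = 1/2 - min (d/2) (1/4)"
    have t: "0 < t" "t < 1/2" "1/2 - t \<le> d/2" using d by (auto simp: t_def)
    have "dist (T N t) (T N (1/2)) < T N (1/2) - B" using t d by (intro d(2)) (auto simp: dist_real_def)
    hence TB: "B < T N t" by (simp add: dist_real_def)
    have "b * (pi * t) ^ 4 < F7 N (pi * t)"
      unfolding F7_eq[OF t(1,2)] key using TB t by (intro mult_strict_left_mono) (auto simp: B_def)
    thus "\<exists>x. 0 < x \<and> x < pi/2 \<and> \<not> (F7 N x < b * x ^ 4)"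
      using t by (intro exI[of _ "pi * t"]) auto
  }
qed

end
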